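(* Let $\{X_1,X_2,\dots\}$ be a random dense countable subset of $(0,1)$. Suppose that on the same probability space there are random variables $Y_1,Y_2,\dots$ with values in $(0,1)$ such that: - $\{Y_1,Y_2,\dots\}=\{X_1,X_2,\dots\}$ a.s.; - $Y_{2k-1}<\tfrac12$ and $Y_{2k}\ge\tfrac12$ a.s. for all $k$; - the sequence $(Y_2,Y_4,\dots)$ is independent of $(Y_1,Y_3,\dots)$. Suppose moreover that $\Pr(X_1<\tfrac12)>0$. Then for almost all $x_1\in(0,\tfrac12)$ with respect to the distribution of $X_1$, the conditional joint distribution of $(Y_2,Y_4,\dots)$ given $X_1=x_1$ is absolutely continuous with respect to the unconditional joint distribution of $(Y_2,Y_4,\dots)$.
   Context: A random dense countable subset of $(0,1)$ is given by random variables $X_1,X_2,\dots:\Omega\to(0,1)$ such that $\{X_1(\omega),X_2(\omega),\dots\}$ is dense in $(0,1)$ for a.e. $\omega$. *)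

theory Defs
  imports "HOL-Probability.Probability"
begin

abbreviation seq_space :: "(nat \<Rightarrow> real) measure" where
  "seq_space \<equiv> Pi\<^sub>M UNIV (\<lambda>_. borel)"

text \<open>K is a (regular) version of the conditional distribution of Z given X = x
  under M: a probability kernel from borel to N such that
  P(X \<in> A, Z \<in> B) = integral over A of K x B with respect to the law of X.\<close>
definition cond_distr_kernel ::
  "'a measure \<Rightarrow> ('a \<Rightarrow> real) \<Rightarrow> 'b measure \<Rightarrow> ('a \<Rightarrow> 'b) \<Rightarrow> (real \<Rightarrow> 'b measure) \<Rightarrow> bool" where
  "cond_distr_kernel M X N Z K \<longleftrightarrow>
     K \<in> borel \<rightarrow>\<^sub>M prob_algebra N \<and>
     (\<forall>A \<in> sets borel. \<forall>B \<in> sets N.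
        emeasure M {\<omega> \<in> space M. X \<omega> \<in> A \<and> Z \<omega> \<in> B}
          = (\<integral>\<^sup>+ x. indicator A x * emeasure (K x) B \<partial>(distr M borel X)))"

end

theory Submission imports Defs begin

lemma seq_gen:
  obtains G :: "(nat \<Rightarrow> real) set set" where "countable G" "Int_stable G" "UNIV \<in> G"
    "G \<subseteq> sets seq_space" "sets seq_space = sigma_sets UNIV G"
proof -
  obtain B :: "(nat \<Rightarrow> real) set set" where B: "countable B" "topological_basis B"
    using ex_countable_basis by blast
  define G where "G = Inter ` {F. finite F \<and> F \<subseteq> B}"
  have c: "countable G" unfolding G_def
    by (intro countable_image countable_Collect_finite_subset B)
  have i: "Int_stable G" unfolding Int_stable_def G_def
  proof safe
    fix F F' assume "F \<subseteq> B" "finite F" "F' \<subseteq> B" "finite F'"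
    then show "\<Inter> F \<inter> \<Inter> F' \<in> Inter ` {F. finite F \<and> F \<subseteq> B}"
      by (intro image_eqI[of _ _ "F \<union> F'"]) auto
  qed
  have u: "UNIV \<in> G" unfolding G_def by (intro image_eqI[of _ _ "{}"]) auto
  have ob: "\<And>b. b \<in> B \<Longrightarrow> open b" using B(2) topological_basis_open by blast
  have Gs: "G \<subseteq> sets borel" unfolding G_def
  proof safe
    fix F assume "F \<subseteq> B" "finite F"
    then have "open (\<Inter>F)" using ob by (intro open_Inter) auto
    then show "\<Inter>F \<in> sets borel" by simp
  qed
  have sb: "sets borel = sigma_sets (UNIV :: (nat \<Rightarrow> real) set) B"
    by (subst borel_eq_countable_basis[OF B]) (simp add: sets_measure_of)
  have "sigma_sets UNIV G = sets (borel :: (nat \<Rightarrow> real) measure)"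
  proof
    show "sigma_sets UNIV G \<subseteq> sets borel"
      using Gs by (metis sets.sigma_sets_subset space_borel)
    have "B \<subseteq> G" unfolding G_def by (auto intro!: image_eqI[of _ _ "{_}"])
    then show "sets borel \<subseteq> sigma_sets UNIV G" unfolding sb by (rule sigma_sets_mono')
  qed
  moreover have "sets seq_space = sets (borel :: (nat \<Rightarrow> real) measure)"
    by (rule sets_PiM_equal_borel)
  ultimately show ?thesis using that[OF c i u] Gs by auto
qed

theorem proposition5p2:
  fixes M :: "'a measure"
    and X Y :: "nat \<Rightarrow> 'a \<Rightarrow> real"
    and K :: "real \<Rightarrow> (nat \<Rightarrow> real) measure"
  assumes "prob_space M"
    and X_meas: "\<And>i. X i \<in> borel_measurable M"
    and X_range: "\<And>i \<omega>. \<omega> \<in> space M \<Longrightarrow> X i \<omega> \<in> {0<..<1}"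
    and X_dense: "AE \<omega> in M. {0<..<1} \<subseteq> closure (range (\<lambda>i. X i \<omega>))"
    and Y_meas: "\<And>i. Y i \<in> borel_measurable M"
    and Y_range: "\<And>i \<omega>. \<omega> \<in> space M \<Longrightarrow> Y i \<omega> \<in> {0<..<1}"
    and Y_eq: "AE \<omega> in M. range (\<lambda>i. Y i \<omega>) = range (\<lambda>i. X i \<omega>)"
    and Y_odd: "\<And>k. AE \<omega> in M. Y (2 * k) \<omega> < 1 / 2"
    and Y_even: "\<And>k. AE \<omega> in M. Y (2 * k + 1) \<omega> \<ge> 1 / 2"
    and indep: "prob_space.indep_var M
                  seq_space (\<lambda>\<omega> k. Y (2 * k + 1) \<omega>)
                  seq_space (\<lambda>\<omega> k. Y (2 * k) \<omega>)"
    and pos: "measure M {\<omega> \<in> space M. X 0 \<omega> < 1 / 2} > 0"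
    and K: "cond_distr_kernel M (X 0) seq_space (\<lambda>\<omega> k. Y (2 * k + 1) \<omega>) K"
  shows "AE x in distr M borel (X 0).
           x \<in> {0<..<1 / 2} \<longrightarrow>
           absolutely_continuous (distr M seq_space (\<lambda>\<omega> k. Y (2 * k + 1) \<omega>)) (K x)"
proof -
  interpret P: prob_space M by fact
  note [measurable] = X_meas Y_meas
  define W where "W = (\<lambda>\<omega> k. Y (2 * k + 1) \<omega>)"
  define I where "I = {0<..<1/2::real}"
  define \<nu> where "\<nu> = distr M seq_space W"
  define L where "L = distr M borel (X 0)"
  define \<mu>j where "\<mu>j = (\<lambda>j. distr M borel (Y (2*j)))"
  define Gm where "Gm = measure_pmf (geometric_pmf (1/2))"
  define \<mu> where "\<mu> = Gm \<bind> \<mu>j"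
  define S2 where "S2 = (borel :: real measure) \<Otimes>\<^sub>M seq_space"
  have W_meas[measurable]: "W \<in> M \<rightarrow>\<^sub>M seq_space" unfolding W_def by (rule measurable_PiM_single') auto
  have \<nu>_prob: "prob_space \<nu>" unfolding \<nu>_def by (rule P.prob_space_distr) simp
  have sets_\<nu>[simp]: "sets \<nu> = sets seq_space" unfolding \<nu>_def by simp
  have space_\<nu>[simp]: "space \<nu> = UNIV" unfolding \<nu>_def by (simp add: space_PiM)
  have \<mu>j_sp: "\<mu>j j \<in> space (prob_algebra borel)" for j
    unfolding \<mu>j_def space_prob_algebra by (auto intro!: P.prob_space_distr)
  have \<mu>j_meas: "\<mu>j \<in> Gm \<rightarrow>\<^sub>M prob_algebra borel"
    unfolding Gm_def using \<mu>j_sp by simp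
  have Gm_sp: "Gm \<in> space (prob_algebra Gm)"
    unfolding Gm_def space_prob_algebra by (simp add: prob_space_measure_pmf)
  have \<mu>_prob: "prob_space \<mu>" unfolding \<mu>_def by (rule prob_space_bind'[OF Gm_sp \<mu>j_meas])
  have sets_\<mu>[simp]: "sets \<mu> = sets borel" unfolding \<mu>_def by (rule sets_bind'[OF Gm_sp \<mu>j_meas])
  have space_\<mu>[simp]: "space \<mu> = UNIV" using sets_eq_imp_space_eq[OF sets_\<mu>] by simp
  have sets_\<mu>j[simp]: "sets (\<mu>j j) = sets borel" for j unfolding \<mu>j_def by simp
  have setGm: "set_pmf (geometric_pmf (1/2)) = UNIV" by (rule set_pmf_geometric) auto
  have \<mu>_zero: "(\<integral>\<^sup>+x. g x \<partial>\<mu>j j) = 0" if g: "g \<in> borel_measurable borel" "(\<integral>\<^sup>+x. g x \<partial>\<mu>) = 0" for g j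
  proof -
    have "(\<integral>\<^sup>+x. g x \<partial>\<mu>) = (\<integral>\<^sup>+i. \<integral>\<^sup>+x. g x \<partial>\<mu>j i \<partial>Gm)"
      unfolding \<mu>_def by (rule nn_integral_bind[OF g(1) measurable_prob_algebraD[OF \<mu>j_meas]])
    then have "(\<integral>\<^sup>+i. \<integral>\<^sup>+x. g x \<partial>\<mu>j i \<partial>Gm) = 0" using g(2) by simp
    then have "AE i in Gm. (\<integral>\<^sup>+x. g x \<partial>\<mu>j i) = 0"
      by (subst (asm) nn_integral_0_iff_AE) (auto simp: Gm_def)
    then show ?thesis unfolding Gm_def AE_measure_pmf_iff setGm by auto
  qed
  interpret \<nu>: prob_space \<nu> by (rule \<nu>_prob)
  interpret \<mu>: prob_space \<mu> by (rule \<mu>_prob)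
  have S2_sets: "sets (\<mu> \<Otimes>\<^sub>M \<nu>) = sets S2" unfolding S2_def
    by (rule sets_pair_measure_cong) simp_all
  have S2_sets_j: "sets (\<mu>j j \<Otimes>\<^sub>M \<nu>) = sets S2" for j unfolding S2_def
    by (rule sets_pair_measure_cong) simp_all
  have XW_meas[measurable]: "(\<lambda>\<omega>. (X 0 \<omega>, W \<omega>)) \<in> M \<rightarrow>\<^sub>M S2" unfolding S2_def by measurable
  have YW_meas[measurable]: "(\<lambda>\<omega>. (Y (2*j) \<omega>, W \<omega>)) \<in> M \<rightarrow>\<^sub>M S2" for j unfolding S2_def by measurable
  have UNIV_seq: "UNIV \<in> sets seq_space" using sets.top[of seq_space] by (simp add: space_PiM)
  have IU: "I \<times> UNIV \<in> sets S2" unfolding S2_def I_def using UNIV_seq by (intro pair_measureI) auto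
  define \<pi> where "\<pi> = density (distr M S2 (\<lambda>\<omega>. (X 0 \<omega>, W \<omega>))) (indicator (I \<times> UNIV))"
  have sets_\<pi>: "sets \<pi> = sets S2" unfolding \<pi>_def by simp
  have \<pi>_eq: "emeasure \<pi> C = emeasure M {\<omega>\<in>space M. (X 0 \<omega>, W \<omega>) \<in> C \<and> X 0 \<omega> \<in> I}"
    if C: "C \<in> sets S2" for C
  proof -
    have "emeasure \<pi> C = (\<integral>\<^sup>+z. indicator (I \<times> UNIV) z * indicator C z \<partial>distr M S2 (\<lambda>\<omega>. (X 0 \<omega>, W \<omega>)))"
      unfolding \<pi>_def using C IU by (subst emeasure_density) auto
    also have "\<dots> = (\<integral>\<^sup>+z. indicator (C \<inter> I \<times> UNIV) z \<partial>distr M S2 (\<lambda>\<omega>. (X 0 \<omega>, W \<omega>)))"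
      by (intro nn_integral_cong) (auto split: split_indicator)
    also have "\<dots> = emeasure (distr M S2 (\<lambda>\<omega>. (X 0 \<omega>, W \<omega>))) (C \<inter> I \<times> UNIV)"
      using C IU by (subst nn_integral_indicator) auto
    also have "\<dots> = emeasure M ((\<lambda>\<omega>. (X 0 \<omega>, W \<omega>)) -` (C \<inter> I \<times> UNIV) \<inter> space M)"
      using C IU by (subst emeasure_distr) auto
    also have "(\<lambda>\<omega>. (X 0 \<omega>, W \<omega>)) -` (C \<inter> I \<times> UNIV) \<inter> space M = {\<omega>\<in>space M. (X 0 \<omega>, W \<omega>) \<in> C \<and> X 0 \<omega> \<in> I}"
      by auto
    finally show ?thesis .
  qed
  have ae1: "AE \<omega> in M. X 0 \<omega> \<in> I \<longrightarrow> (\<exists>j. X 0 \<omega> = Y (2*j) \<omega>)"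
  proof -
    have "AE \<omega> in M. \<forall>k. Y (2*k+1) \<omega> \<ge> 1/2" by (subst AE_all_countable) (use Y_even in blast)
    then show ?thesis using Y_eq
    proof eventually_elim
      case (elim \<omega>)
      show ?case
      proof
        assume xi: "X 0 \<omega> \<in> I"
        have "X 0 \<omega> \<in> range (\<lambda>i. Y i \<omega>)" using elim(2) by auto
        then obtain i where i: "X 0 \<omega> = Y i \<omega>" by auto
        show "\<exists>j. X 0 \<omega> = Y (2*j) \<omega>"
        proof (cases "even i")
          case True then show ?thesis using i by (intro exI[of _ "i div 2"]) auto
        next
          case False
          then have "i = 2 * (i div 2) + 1" by presburger
          then have "Y i \<omega> \<ge> 1/2" using elim(1) by metis
          then show ?thesis using i xi by (auto simp: I_def)
        qed
      qed
    qed
  qed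
  have ind_j: "emeasure (\<mu>j j \<Otimes>\<^sub>M \<nu>) C = emeasure M {\<omega>\<in>space M. (Y (2*j) \<omega>, W \<omega>) \<in> C}"
    if C: "C \<in> sets S2" for j C
  proof -
    have pj: "prob_space (\<mu>j j)" using \<mu>j_sp[of j] by (simp add: space_prob_algebra)
    define V where "V = (\<lambda>\<omega> k. Y (2 * k) \<omega>)"
    have V_meas[measurable]: "V \<in> M \<rightarrow>\<^sub>M seq_space" unfolding V_def by (rule measurable_PiM_single') auto
    define \<nu>V where "\<nu>V = distr M seq_space V"
    have eqd: "\<nu> \<Otimes>\<^sub>M \<nu>V = distr M (seq_space \<Otimes>\<^sub>M seq_space) (\<lambda>\<omega>. (W \<omega>, V \<omega>))"
      using indep P.indep_var_distribution_eq \<nu>_def \<nu>V_def W_def V_def by auto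
    interpret pV: prob_space \<nu>V unfolding \<nu>V_def by (rule P.prob_space_distr) simp
    have m2: "(\<lambda>v. v j) \<in> (seq_space :: (nat \<Rightarrow> real) measure) \<rightarrow>\<^sub>M borel"
      by (rule measurable_component_singleton) simp
    have "\<mu>j j \<Otimes>\<^sub>M \<nu> = distr M S2 (\<lambda>\<omega>. (Y (2*j) \<omega>, W \<omega>))"
    proof (rule pair_measure_eqI)
      show "sigma_finite_measure (\<mu>j j)" using pj by (simp add: prob_space_imp_sigma_finite)
      show "sigma_finite_measure \<nu>" by (rule \<nu>.sigma_finite_measure_axioms)
      show "sets (\<mu>j j \<Otimes>\<^sub>M \<nu>) = sets (distr M S2 (\<lambda>\<omega>. (Y (2*j) \<omega>, W \<omega>)))"
        using S2_sets_j by simp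
      fix A B assume A: "A \<in> sets (\<mu>j j)" and B: "B \<in> sets \<nu>"
      define B' where "B' = (\<lambda>v. v j) -` A \<inter> space seq_space"
      have B': "B' \<in> sets seq_space" unfolding B'_def using A by (intro measurable_sets[OF m2]) auto
      have "emeasure (distr M S2 (\<lambda>\<omega>. (Y (2*j) \<omega>, W \<omega>))) (A \<times> B)
          = emeasure M ((\<lambda>\<omega>. (Y (2*j) \<omega>, W \<omega>)) -` (A \<times> B) \<inter> space M)"
        using A B by (subst emeasure_distr) (auto simp: S2_def)
      also have "\<dots> = emeasure M ((\<lambda>\<omega>. (W \<omega>, V \<omega>)) -` (B \<times> B') \<inter> space M)"
        by (intro arg_cong[where f="emeasure M"]) (auto simp: B'_def V_def space_PiM)
      also have "\<dots> = emeasure (\<nu> \<Otimes>\<^sub>M \<nu>V) (B \<times> B')"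
        unfolding eqd using B B' by (subst emeasure_distr) auto
      also have "\<dots> = emeasure \<nu> B * emeasure \<nu>V B'"
        using B B' by (intro pV.emeasure_pair_measure_Times) (auto simp: \<nu>V_def)
      also have "emeasure \<nu>V B' = emeasure (\<mu>j j) A"
        unfolding \<nu>V_def \<mu>j_def using A B' 
        by (subst emeasure_distr, simp, simp)+ (auto intro!: arg_cong[where f="emeasure M"] simp: B'_def V_def space_PiM)
      finally show "emeasure (\<mu>j j) A * emeasure \<nu> B = emeasure (distr M S2 (\<lambda>\<omega>. (Y (2*j) \<omega>, W \<omega>))) (A \<times> B)"
        by (simp add: mult.commute)
    qed
    then show ?thesis using C by (simp add: emeasure_distr vimage_def Int_def conj_commute)
  qed
  have \<rho>_prob: "prob_space (\<mu> \<Otimes>\<^sub>M \<nu>)" by (rule prob_space_pair[OF \<mu>_prob \<nu>_prob])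
  interpret \<rho>: prob_space "\<mu> \<Otimes>\<^sub>M \<nu>" by (rule \<rho>_prob)
  have ac: "absolutely_continuous (\<mu> \<Otimes>\<^sub>M \<nu>) \<pi>"
    unfolding absolutely_continuous_def
  proof
    fix C assume Cn: "C \<in> null_sets (\<mu> \<Otimes>\<^sub>M \<nu>)"
    have C0: "emeasure (\<mu> \<Otimes>\<^sub>M \<nu>) C = 0" using Cn by (rule null_setsD1)
    have C: "C \<in> sets S2" using null_setsD2[OF Cn] unfolding S2_sets .
    have sb: "sets (borel \<Otimes>\<^sub>M \<nu>) = sets S2" unfolding S2_def
      by (rule sets_pair_measure_cong) simp_all
    have Cb: "C \<in> sets (borel \<Otimes>\<^sub>M \<nu>)" unfolding sb by (rule C)
    have gm: "(\<lambda>x. emeasure \<nu> (Pair x -` C)) \<in> borel_measurable borel"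
      by (rule \<nu>.measurable_emeasure_Pair[OF Cb])
    have "(\<integral>\<^sup>+x. emeasure \<nu> (Pair x -` C) \<partial>\<mu>) = 0"
      using C0 \<nu>.emeasure_pair_measure_alt[OF null_setsD2[OF Cn]] by simp
    then have "(\<integral>\<^sup>+x. emeasure \<nu> (Pair x -` C) \<partial>\<mu>j j) = 0" for j by (rule \<mu>_zero[OF gm])
    moreover have Cj: "C \<in> sets (\<mu>j j \<Otimes>\<^sub>M \<nu>)" for j unfolding S2_sets_j by (rule C)
    ultimately have "emeasure (\<mu>j j \<Otimes>\<^sub>M \<nu>) C = 0" for j
      using \<nu>.emeasure_pair_measure_alt[OF Cj] by simp
    then have e0: "emeasure M {\<omega>\<in>space M. (Y (2*j) \<omega>, W \<omega>) \<in> C} = 0" for j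
      using ind_j[OF C] by simp
    have "(\<lambda>\<omega>. (Y (2*j) \<omega>, W \<omega>)) -` C \<inter> space M \<in> sets M" for j
      by (rule measurable_sets[OF YW_meas C])
    moreover have "(\<lambda>\<omega>. (Y (2*j) \<omega>, W \<omega>)) -` C \<inter> space M = {\<omega>\<in>space M. (Y (2*j) \<omega>, W \<omega>) \<in> C}" for j
      by auto
    ultimately have N: "{\<omega>\<in>space M. (Y (2*j) \<omega>, W \<omega>) \<in> C} \<in> null_sets M" for j
      using e0 by (metis null_setsI)
    have "emeasure \<pi> C = emeasure M {\<omega>\<in>space M. (X 0 \<omega>, W \<omega>) \<in> C \<and> X 0 \<omega> \<in> I}"
      by (rule \<pi>_eq[OF C])
    also have "\<dots> \<le> emeasure M (\<Union>j. {\<omega>\<in>space M. (Y (2*j) \<omega>, W \<omega>) \<in> C})"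
    proof (rule emeasure_mono_AE)
      show "AE \<omega> in M. \<omega> \<in> {\<omega>\<in>space M. (X 0 \<omega>, W \<omega>) \<in> C \<and> X 0 \<omega> \<in> I} \<longrightarrow>
               \<omega> \<in> (\<Union>j. {\<omega>\<in>space M. (Y (2*j) \<omega>, W \<omega>) \<in> C})"
        using ae1 by eventually_elim force
      show "(\<Union>j. {\<omega>\<in>space M. (Y (2*j) \<omega>, W \<omega>) \<in> C}) \<in> sets M"
        using null_sets_UN[OF N] by (rule null_setsD2)
    qed
    also have "\<dots> = 0" using null_sets_UN[OF N] by (rule null_setsD1)
    finally have "emeasure \<pi> C = 0" by simp
    moreover have "C \<in> sets \<pi>" unfolding sets_\<pi> by (rule C)
    ultimately show "C \<in> null_sets \<pi>" by (rule null_setsI)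
  qed
  obtain f where f_meas: "f \<in> borel_measurable (\<mu> \<Otimes>\<^sub>M \<nu>)" and f_dens: "density (\<mu> \<Otimes>\<^sub>M \<nu>) f = \<pi>"
    using \<rho>.Radon_Nikodym[OF ac] sets_\<pi> S2_sets by auto
  note f_meas[measurable]
  have Kk: "K \<in> borel \<rightarrow>\<^sub>M prob_algebra seq_space"
    and Keq: "\<And>A B. A \<in> sets borel \<Longrightarrow> B \<in> sets seq_space \<Longrightarrow>
        emeasure M {\<omega> \<in> space M. X 0 \<omega> \<in> A \<and> W \<omega> \<in> B}
          = (\<integral>\<^sup>+ x. indicator A x * emeasure (K x) B \<partial>L)"
    using K unfolding cond_distr_kernel_def W_def L_def by auto
  have Kx: "prob_space (K x) \<and> sets (K x) = sets seq_space" for x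
    using measurable_space[OF Kk, of x] by (simp add: space_prob_algebra)
  have Kmeas[measurable]: "(\<lambda>x. emeasure (K x) B) \<in> borel_measurable borel" if B: "B \<in> sets seq_space" for B
    by (rule measurable_compose[OF measurable_prob_algebraD[OF Kk] measurable_emeasure_subprob_algebra[OF B]])
  have KU: "emeasure (K x) UNIV = 1" for x
  proof -
    interpret Kp: prob_space "K x" using Kx by auto
    have "space (K x) = UNIV" using sets_eq_imp_space_eq[of "K x" seq_space] Kx by (simp add: space_PiM)
    then show ?thesis using Kp.emeasure_space_1 by simp
  qed
  define G where "G = (\<lambda>B x. \<integral>\<^sup>+w. f (x, w) * indicator B w \<partial>\<nu>)"
  define F where "F = (\<lambda>x. \<integral>\<^sup>+w. f (x, w) \<partial>\<nu>)"
  have GF: "G UNIV = F" unfolding G_def F_def by simp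
  have Gmeas: "G B \<in> borel_measurable \<mu>" if B: "B \<in> sets seq_space" for B
  proof -
    have Bn: "B \<in> sets \<nu>" using B by simp
    have [measurable]: "(\<lambda>z. indicator B (snd z) :: ennreal) \<in> borel_measurable (\<mu> \<Otimes>\<^sub>M \<nu>)"
      using measurable_compose[OF measurable_snd[of \<mu> \<nu>] borel_measurable_indicator[OF Bn]] by (simp add: o_def)
    have "(\<lambda>z. f z * indicator B (snd z)) \<in> borel_measurable (\<mu> \<Otimes>\<^sub>M \<nu>)" by measurable
    from \<nu>.borel_measurable_nn_integral_fst[OF this] show ?thesis unfolding G_def by simp
  qed
  have Fmeas: "F \<in> borel_measurable \<mu>" unfolding F_def
    using \<nu>.borel_measurable_nn_integral_fst[OF f_meas] by simp
  have L_prob: "prob_space L" unfolding L_def by (rule P.prob_space_distr) simp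
  have sets_L[simp]: "sets L = sets borel" unfolding L_def by simp
  define Lp where "Lp = density L (indicator I)"
  have R1: "emeasure \<pi> (A \<times> B) = (\<integral>\<^sup>+x. indicator A x * G B x \<partial>\<mu>)"
    if A: "A \<in> sets borel" and B: "B \<in> sets seq_space" for A B
  proof -
    have AB: "A \<times> B \<in> sets (\<mu> \<Otimes>\<^sub>M \<nu>)" using A B by (intro pair_measureI) auto
    have "emeasure \<pi> (A \<times> B) = (\<integral>\<^sup>+z. f z * indicator (A \<times> B) z \<partial>(\<mu> \<Otimes>\<^sub>M \<nu>))"
      unfolding f_dens[symmetric] using AB by (subst emeasure_density) auto
    also have "\<dots> = (\<integral>\<^sup>+x. \<integral>\<^sup>+w. f (x, w) * indicator (A \<times> B) (x, w) \<partial>\<nu> \<partial>\<mu>)"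
      using borel_measurable_times_ennreal[OF f_meas borel_measurable_indicator[OF AB]]
      by (subst \<nu>.nn_integral_fst[symmetric]) auto
    also have "\<dots> = (\<integral>\<^sup>+x. indicator A x * G B x \<partial>\<mu>)"
    proof (intro nn_integral_cong)
      fix x show "(\<integral>\<^sup>+w. f (x, w) * indicator (A \<times> B) (x, w) \<partial>\<nu>) = indicator A x * G B x"
        by (cases "x \<in> A") (simp_all add: G_def indicator_times)
    qed
    finally show ?thesis .
  qed
  have R2: "emeasure \<pi> (A \<times> B) = (\<integral>\<^sup>+x. indicator A x * emeasure (K x) B \<partial>Lp)"
    if A: "A \<in> sets borel" and B: "B \<in> sets seq_space" for A B
  proof -
    have AB: "A \<times> B \<in> sets S2" using A B unfolding S2_def by (intro pair_measureI) auto
    have "emeasure \<pi> (A \<times> B) = emeasure M {\<omega>\<in>space M. X 0 \<omega> \<in> A \<inter> I \<and> W \<omega> \<in> B}"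
      unfolding \<pi>_eq[OF AB] by (intro arg_cong[where f="emeasure M"]) auto
    also have "\<dots> = (\<integral>\<^sup>+ x. indicator (A \<inter> I) x * emeasure (K x) B \<partial>L)"
      using A B by (intro Keq) (auto simp: I_def)
    also have "\<dots> = (\<integral>\<^sup>+ x. indicator I x * (indicator A x * emeasure (K x) B) \<partial>L)"
      by (intro nn_integral_cong) (auto split: split_indicator)
    also have "\<dots> = (\<integral>\<^sup>+x. indicator A x * emeasure (K x) B \<partial>Lp)"
    proof -
      have i1: "indicator I \<in> borel_measurable L"
        unfolding measurable_cong_sets[OF sets_L refl] by (rule borel_measurable_indicator) (simp add: I_def)
      have i2: "(\<lambda>x. indicator A x * emeasure (K x) B) \<in> borel_measurable L"
        unfolding measurable_cong_sets[OF sets_L refl]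
        by (rule borel_measurable_times_ennreal[OF borel_measurable_indicator[OF A] Kmeas[OF B]])
      show ?thesis unfolding Lp_def using i1 i2 by (subst nn_integral_density) auto
    qed
    finally show ?thesis .
  qed
  have Lp_eq: "Lp = density \<mu> F"
  proof (rule measure_eqI)
    show "sets Lp = sets (density \<mu> F)" unfolding Lp_def by simp
    fix A assume "A \<in> sets Lp"
    then have A: "A \<in> sets borel" unfolding Lp_def by simp
    have "emeasure Lp A = (\<integral>\<^sup>+x. indicator A x * emeasure (K x) UNIV \<partial>Lp)"
      using A by (simp add: KU Lp_def)
    also have "\<dots> = (\<integral>\<^sup>+x. indicator A x * G UNIV x \<partial>\<mu>)"
      using R1[OF A UNIV_seq] R2[OF A UNIV_seq] by simp
    also have "\<dots> = emeasure (density \<mu> F) A"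
      using A Fmeas by (subst emeasure_density) (auto simp: GF mult.commute)
    finally show "emeasure Lp A = emeasure (density \<mu> F) A" .
  qed
  have Kmu: "(\<lambda>x. emeasure (K x) B) \<in> borel_measurable \<mu>" if B: "B \<in> sets seq_space" for B
    unfolding measurable_cong_sets[OF sets_\<mu> refl] by (rule Kmeas[OF B])
  have AEB: "AE x in \<mu>. F x * emeasure (K x) B = G B x" if B: "B \<in> sets seq_space" for B
  proof -
    have m1: "(\<lambda>x. F x * emeasure (K x) B) \<in> borel_measurable \<mu>"
      by (rule borel_measurable_times_ennreal[OF Fmeas Kmu[OF B]])
    have "density \<mu> (\<lambda>x. F x * emeasure (K x) B) = density \<mu> (G B)"
    proof (rule measure_eqI)
      show "sets (density \<mu> (\<lambda>x. F x * emeasure (K x) B)) = sets (density \<mu> (G B))" by simp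
      fix A assume "A \<in> sets (density \<mu> (\<lambda>x. F x * emeasure (K x) B))"
      then have A: "A \<in> sets borel" by simp
      have Am: "(\<lambda>x. indicator A x * emeasure (K x) B) \<in> borel_measurable \<mu>"
        by (rule borel_measurable_times_ennreal[OF borel_measurable_indicator Kmu[OF B]]) (use A in simp)
      have "emeasure (density \<mu> (\<lambda>x. F x * emeasure (K x) B)) A
          = (\<integral>\<^sup>+x. F x * emeasure (K x) B * indicator A x \<partial>\<mu>)"
        using A m1 by (subst emeasure_density) auto
      also have "\<dots> = (\<integral>\<^sup>+x. F x * (indicator A x * emeasure (K x) B) \<partial>\<mu>)"
        by (intro nn_integral_cong) (simp add: mult_ac)
      also have "\<dots> = (\<integral>\<^sup>+x. indicator A x * emeasure (K x) B \<partial>density \<mu> F)"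
        using Fmeas Am by (subst nn_integral_density) auto
      also have "\<dots> = emeasure \<pi> (A \<times> B)" using R2[OF A B] Lp_eq by simp
      also have "\<dots> = (\<integral>\<^sup>+x. indicator A x * G B x \<partial>\<mu>)" by (rule R1[OF A B])
      also have "\<dots> = emeasure (density \<mu> (G B)) A"
        using A Gmeas[OF B] by (subst emeasure_density) (auto simp: mult.commute)
      finally show "emeasure (density \<mu> (\<lambda>x. F x * emeasure (K x) B)) A = emeasure (density \<mu> (G B)) A" .
    qed
    then show ?thesis by (rule \<mu>.density_unique[OF m1 Gmeas[OF B]])
  qed
  obtain Gn where Gn: "countable Gn" "Int_stable Gn" "UNIV \<in> Gn" "Gn \<subseteq> sets seq_space"
    "sets seq_space = sigma_sets UNIV Gn" by (rule seq_gen)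
  have AEall: "AE x in \<mu>. \<forall>B\<in>Gn. F x * emeasure (K x) B = G B x"
    using AEB Gn(1,4) by (subst AE_ball_countable) auto
  have i1: "indicator I \<in> borel_measurable L"
    unfolding measurable_cong_sets[OF sets_L refl] by (rule borel_measurable_indicator) (simp add: I_def)
  have Ffin: "AE x in \<mu>. F x \<noteq> \<infinity>"
  proof (rule nn_integral_PInf_AE[OF Fmeas])
    have "integral\<^sup>N \<mu> F = emeasure (density \<mu> F) UNIV"
      using Fmeas by (subst emeasure_density) auto
    also have "\<dots> = emeasure Lp UNIV" by (simp add: Lp_eq)
    also have "\<dots> = (\<integral>\<^sup>+x. indicator I x * indicator UNIV x \<partial>L)"
      unfolding Lp_def using i1 by (subst emeasure_density) auto
    also have "\<dots> \<le> (\<integral>\<^sup>+x. 1 \<partial>L)"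
      by (intro nn_integral_mono) (auto split: split_indicator)
    also have "\<dots> = 1"
    proof -
      interpret Lq: prob_space L by (rule L_prob)
      show ?thesis using Lq.emeasure_space_1 by simp
    qed
    finally show "integral\<^sup>N \<mu> F \<noteq> \<infinity>" by (auto simp: top_unique)
  qed
  have good: "absolutely_continuous \<nu> (K x)"
    if x: "\<forall>B\<in>Gn. F x * emeasure (K x) B = G B x" "F x \<noteq> \<infinity>" "0 < F x" for x
  proof -
    have fxm: "(\<lambda>w. f (x, w)) \<in> borel_measurable \<nu>" using measurable_Pair2[OF f_meas, of x] by simp
    have Kxs: "sets (K x) = sets seq_space" using Kx by auto
    have lhs: "emeasure (density (K x) (\<lambda>_. F x)) B = F x * emeasure (K x) B"
      if B: "B \<in> sets seq_space" for B
      using B Kxs by (subst emeasure_density) (auto intro!: nn_integral_cmult_indicator)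
    have rhs: "emeasure (density \<nu> (\<lambda>w. f (x, w))) B = G B x"
      if B: "B \<in> sets seq_space" for B
      using B fxm by (subst emeasure_density) (auto simp: G_def)
    have eqm: "density (K x) (\<lambda>_. F x) = density \<nu> (\<lambda>w. f (x, w))"
    proof (rule measure_eqI_generator_eq[where \<Omega>=UNIV and E=Gn and A="\<lambda>_. UNIV"])
      show "Int_stable Gn" by (rule Gn(2))
      show "Gn \<subseteq> Pow UNIV" by simp
      fix X assume "X \<in> Gn"
      then have X: "X \<in> sets seq_space" using Gn(4) by auto
      show "emeasure (density (K x) (\<lambda>_. F x)) X = emeasure (density \<nu> (\<lambda>w. f (x, w))) X"
        using lhs[OF X] rhs[OF X] x(1) \<open>X \<in> Gn\<close> by simp
    next
      show "sets (density (K x) (\<lambda>_. F x)) = sigma_sets UNIV Gn" using Kxs Gn(5) by simp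
      show "sets (density \<nu> (\<lambda>w. f (x, w))) = sigma_sets UNIV Gn" using Gn(5) by simp
      show "range (\<lambda>_. UNIV) \<subseteq> Gn" using Gn(3) by auto
      show "(\<Union>i::nat. UNIV) = UNIV" by simp
      show "emeasure (density (K x) (\<lambda>_. F x)) UNIV \<noteq> \<infinity>" for i :: nat
        using lhs[OF UNIV_seq] KU x(2) by simp
    qed
    show ?thesis unfolding absolutely_continuous_def
    proof
      fix B assume Bn: "B \<in> null_sets \<nu>"
      then have B: "B \<in> sets seq_space" by auto
      have "F x * emeasure (K x) B = emeasure (density (K x) (\<lambda>_. F x)) B" by (rule lhs[OF B, symmetric])
      also have "\<dots> = emeasure (density \<nu> (\<lambda>w. f (x, w))) B" by (simp add: eqm)
      also have "\<dots> = (\<integral>\<^sup>+w. f (x, w) * indicator B w \<partial>\<nu>)"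
        using B fxm by (subst emeasure_density) auto
      also have "\<dots> = 0" by (rule nn_integral_null_set[OF Bn])
      finally have "emeasure (K x) B = 0" using x(3) by auto
      moreover have "B \<in> sets (K x)" using B Kxs by simp
      ultimately show "B \<in> null_sets (K x)" by (rule null_setsI)
    qed
  qed
  have "AE x in density \<mu> F. absolutely_continuous \<nu> (K x)"
    unfolding AE_density[OF Fmeas] using AEall Ffin by eventually_elim (simp add: good)
  then have "AE x in Lp. absolutely_continuous \<nu> (K x)" unfolding Lp_eq .
  then have "AE x in L. 0 < (indicator I x :: ennreal) \<longrightarrow> absolutely_continuous \<nu> (K x)"
    unfolding Lp_def by (simp add: AE_density[OF i1])
  then show ?thesis unfolding L_def \<nu>_def W_def I_def
    by eventually_elim (auto split: split_indicator)


qed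

end
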